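(* Let $s\geq k\geq 2$ be integers and let $T=T(s,k)$, of order $n=s+k+1$. Then $\mu_2(T)=\frac{3-\sqrt{5}}{2}$ and $\mu_{n-1}(T)=\frac{3+\sqrt{5}}{2}$.
   Context: For a graph $G$ on $n$ vertices, the Laplacian matrix is $L(G)=D(G)-A(G)$, with $D(G)$ the diagonal degree matrix and $A(G)$ the adjacency matrix; its eigenvalues are denoted $0=\mu_1(G)\leq\mu_2(G)\leq\cdots\leq\mu_n(G)$. For integers $1\leq k\leq s$, the spider $T(s,k)$ is the tree obtained from the star $K_{1,s}$ by extending $k$ of its $s$ rays by one extra edge each; it has $s+k+1$ vertices. *)

theory Defs
  imports Complex_Main "Jordan_Normal_Form.Char_Poly"
begin

(* A simple graph on vertex set {0..<n} given by a symmetric irreflexive adjacency predicate. *)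
definition laplacian :: "nat \<Rightarrow> (nat \<Rightarrow> nat \<Rightarrow> bool) \<Rightarrow> real mat" where
  "laplacian n adj = mat n n (\<lambda>(i,j).
     if i = j then real (card {v. v < n \<and> adj i v})
     else if adj i j then -1 else 0)"

(* Eigenvalues of a square matrix, listed with multiplicity in non-decreasing order:
   the unique sorted list whose linear factors multiply to the characteristic polynomial
   (exists for real symmetric matrices such as Laplacians). *)
definition sorted_eigenvalues :: "real mat \<Rightarrow> real list" where
  "sorted_eigenvalues M = (THE xs. sorted xs \<and> char_poly M = (\<Prod>x\<leftarrow>xs. [:-x, 1:]))"

(* mu_i(G), 1-based: 0 = mu_1 \<le> mu_2 \<le> ... \<le> mu_n *)
definition lap_eig :: "nat \<Rightarrow> (nat \<Rightarrow> nat \<Rightarrow> bool) \<Rightarrow> nat \<Rightarrow> real" where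
  "lap_eig n adj i = sorted_eigenvalues (laplacian n adj) ! (i - 1)"

(* Spider T(s,k): centre 0, ray vertices 1..s adjacent to 0, and for 1 \<le> i \<le> k the
   extra vertex s+i adjacent to ray vertex i.  Vertex set {0..<s+k+1}. *)
definition spider_edge :: "nat \<Rightarrow> nat \<Rightarrow> nat \<Rightarrow> nat \<Rightarrow> bool" where
  "spider_edge s k u v \<longleftrightarrow> (u = 0 \<and> 1 \<le> v \<and> v \<le> s) \<or> (1 \<le> u \<and> u \<le> k \<and> v = s + u)"

definition spider_adj :: "nat \<Rightarrow> nat \<Rightarrow> nat \<Rightarrow> nat \<Rightarrow> bool" where
  "spider_adj s k u v \<longleftrightarrow> spider_edge s k u v \<or> spider_edge s k v u"

end

theory Submission
  imports Defs
begin


definition dg :: "nat \<Rightarrow> nat \<Rightarrow> nat \<Rightarrow> nat" where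
  "dg s k i = (if i = 0 then s else if i \<le> k then 2 else 1)"

lemma adj_iff: "spider_adj s k u v \<longleftrightarrow> (u = 0 \<and> 1 \<le> v \<and> v \<le> s) \<or> (v = 0 \<and> 1 \<le> u \<and> u \<le> s)
   \<or> (1 \<le> u \<and> u \<le> k \<and> v = s + u) \<or> (1 \<le> v \<and> v \<le> k \<and> u = s + v)"
  unfolding spider_adj_def spider_edge_def by auto

lemma deg_card:
  assumes "1 \<le> k" "k \<le> s" "i < s + k + 1"
  shows "card {v. v < s + k + 1 \<and> spider_adj s k i v} = dg s k i"
proof -
  consider "i = 0" | "1 \<le> i \<and> i \<le> k" | "k < i \<and> i \<le> s" | "s < i" by linarith
  then show ?thesis
  proof cases
    case 1
    then have "{v. v < s + k + 1 \<and> spider_adj s k i v} = {1..s}" using assms by (auto simp: adj_iff)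
    then show ?thesis using 1 by (simp add: dg_def)
  next
    case 2
    then have "{v. v < s + k + 1 \<and> spider_adj s k i v} = {0, s+i}" using assms by (auto simp: adj_iff)
    then show ?thesis using 2 assms by (simp add: dg_def)
  next
    case 3
    then have "{v. v < s + k + 1 \<and> spider_adj s k i v} = {0}" using assms by (auto simp: adj_iff)
    then show ?thesis using 3 by (simp add: dg_def)
  next
    case 4
    then have "{v. v < s + k + 1 \<and> spider_adj s k i v} = {i - s}" using assms by (auto simp: adj_iff)
    then show ?thesis using 4 assms by (simp add: dg_def)
  qed
qed

definition Mx :: "nat \<Rightarrow> nat \<Rightarrow> real \<Rightarrow> real mat" where
  "Mx s k x = mat (s+k+1) (s+k+1) (\<lambda>(i,j). if i = j then x - real (dg s k i)
      else if spider_adj s k i j then 1 else 0)"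

lemma Mx_char:
  assumes "1 \<le> k" "k \<le> s"
  shows "- char_matrix (laplacian (s+k+1) (spider_adj s k)) x = Mx s k x"
  using deg_card[OF assms] by (intro eq_matI) (auto simp: Mx_def laplacian_def char_matrix_def)

lemma Mx_row:
  assumes "1 \<le> k" "k \<le> s" "1 \<le> a" "a < s + k + 1"
  shows "(\<Sum>j = 0..<s+k+1. Mx s k x $$ (a,j) * g j) = (x - real (dg s k a)) * g a
     + (if a \<le> s then g 0 else 0) + (if a \<le> k then g (s+a) else 0) + (if s < a then g (a-s) else 0)"
proof -
  have "(\<Sum>j = 0..<s+k+1. Mx s k x $$ (a,j) * g j) = (\<Sum>j = 0..<s+k+1.
     (if j = a then (x - real (dg s k a)) * g a else 0) + (if j = 0 then (if a \<le> s then g 0 else 0) else 0)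
   + (if j = s + a then (if a \<le> k then g (s+a) else 0) else 0)
   + (if j = a - s then (if s < a then g (a-s) else 0) else 0))"
    by (rule sum.cong) (use assms in \<open>auto simp: Mx_def adj_iff\<close>)
  also have "\<dots> = (x - real (dg s k a)) * g a
     + (if a \<le> s then g 0 else 0) + (if a \<le> k then g (s+a) else 0) + (if s < a then g (a-s) else 0)"
    using assms by (simp add: sum.distrib; linarith)
  finally show ?thesis .
qed

lemma Mx_row0:
  assumes "1 \<le> k" "k \<le> s"
  shows "(\<Sum>j = 0..<s+k+1. Mx s k x $$ (0,j) * g j) = (x - real s) * g 0
     + (\<Sum>j = 1..<k+1. g j) + (\<Sum>j = k+1..<s+1. g j)"
proof -
  have "(\<Sum>j = 0..<s+k+1. Mx s k x $$ (0,j) * g j) = (\<Sum>j = 0..<s+k+1.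
     (if j = 0 then (x - real s) * g 0 else 0) + (if j \<in> {1..<s+1} then g j else 0))"
    by (rule sum.cong) (use assms in \<open>auto simp: Mx_def adj_iff dg_def\<close>)
  also have "\<dots> = (x - real s) * g 0 + (\<Sum>j = 0..<s+k+1. (if j \<in> {1..<s+1} then g j else 0))"
    by (simp only: sum.distrib) simp
  also have "(\<Sum>j = 0..<s+k+1. (if j \<in> {1..<s+1} then g j else 0)) = (\<Sum>j \<in> {0..<s+k+1} \<inter> {1..<s+1}. g j)"
    by (rule sum.inter_restrict[symmetric]) simp
  also have "{0..<s+k+1} \<inter> {1..<s+1} = {1..<s+1}" by auto
  also have "(\<Sum>j \<in> {1..<s+1}. g j) = (\<Sum>j = 1..<k+1. g j) + (\<Sum>j = k+1..<s+1. g j)"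
    by (rule sum.atLeastLessThan_concat[symmetric]) (use assms in auto)
  finally show ?thesis by simp
qed

definition pq :: "real \<Rightarrow> real" where "pq x = x^2 - 3*x + 1"

definition Vx :: "nat \<Rightarrow> nat \<Rightarrow> real \<Rightarrow> real mat" where
  "Vx s k x = mat (s+k+1) (s+k+1) (\<lambda>(j,b). if j = b then 1
     else if b = 0 then (if j \<le> k then -(x-1)/pq x else if j \<le> s then -1/(x-1) else 1/pq x)
     else if 1 \<le> b \<and> b \<le> k \<and> j = s + b then -1/(x-1) else 0)"

definition dd :: "nat \<Rightarrow> nat \<Rightarrow> real \<Rightarrow> nat \<Rightarrow> real" where
  "dd s k x a = (if a = 0 then x - real s - (real s - real k)/(x-1) - real k*(x-1)/pq x
     else if a \<le> k then pq x/(x-1) else x - 1)"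

lemma W_entry:
  assumes "1 \<le> k" "k \<le> s" "b \<le> a" "a < s + k + 1" "x \<noteq> 1" "pq x \<noteq> 0"
  shows "(Mx s k x * Vx s k x) $$ (a,b) = (if a = b then dd s k x a else 0)"
proof -
  have "(Mx s k x * Vx s k x) $$ (a,b) = (\<Sum>j = 0..<s+k+1. Mx s k x $$ (a,j) * Vx s k x $$ (j,b))"
    using assms by (simp add: Mx_def Vx_def scalar_prod_def)
  also have "\<dots> = (if a = b then dd s k x a else 0)"
  proof (cases "a = 0")
    case True
    then have b: "b = 0" using assms by simp
    have 1: "(\<Sum>j = 1..<k+1. Vx s k x $$ (j,0)) = real k * (-(x-1)/pq x)"
      by (subst sum.cong[where h="\<lambda>_. -(x-1)/pq x"]) (use assms in \<open>auto simp: Vx_def\<close>)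
    have 2: "(\<Sum>j = k+1..<s+1. Vx s k x $$ (j,0)) = (real s - real k) * (-1/(x-1))"
      by (subst sum.cong[where h="\<lambda>_. -1/(x-1)"]) (use assms in \<open>auto simp: Vx_def\<close>)
    show ?thesis unfolding True b Mx_row0[OF assms(1,2)] 1 2 using assms
      by (simp add: Vx_def dd_def field_simps)
  next
    case False
    have a1: "1 \<le> a" using False by simp
    have p1: "(x - 2) - 1/(x-1) = pq x/(x-1)" using assms(5) by (simp add: pq_def field_simps power2_eq_square)
    have p2: "1 + (x - 2) * (-(x-1)/pq x) + 1/pq x = 0" using assms(5,6) by (simp add: pq_def field_simps power2_eq_square)
    have p3: "-(x-1)/pq x + (x - 1) * (1/pq x) = 0" using assms(5,6) by (simp add: field_simps)
    have p4: "1 + (x - 1) * (-1/(x-1)) = 0" using assms(5,6) by (simp add: field_simps)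
    note eq = Mx_row[OF assms(1,2) a1 assms(4), of x "\<lambda>j. Vx s k x $$ (j,b)"]
    consider "a \<le> k" | "k < a" "a \<le> s" | "s < a" by linarith
    then show ?thesis
    proof cases
      case 1
      then consider "b = a" | "b = 0" | "0 < b" "b < a" using assms by linarith
      then show ?thesis
      proof cases
        case 1 then show ?thesis using \<open>a \<le> k\<close> a1 assms p1 by (subst eq) (simp add: Vx_def dg_def dd_def)
      next
        case 2 then show ?thesis using \<open>a \<le> k\<close> a1 assms p2 by (subst eq) (simp add: Vx_def dg_def dd_def)
      next
        case 3 then show ?thesis using \<open>a \<le> k\<close> a1 assms by (subst eq) (simp add: Vx_def dg_def dd_def)
      qed
    next
      case 2
      then consider "b = a" | "b = 0" | "0 < b" "b < a" using assms by linarith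
      then show ?thesis
      proof cases
        case 1 then show ?thesis using 2 a1 assms by (subst eq) (simp add: Vx_def dg_def dd_def)
      next
        case 3 then show ?thesis using 2 a1 assms by (subst eq) (simp add: Vx_def dg_def dd_def)
      next
        case 2 then show ?thesis using \<open>k < a\<close> \<open>a \<le> s\<close> a1 assms p4 by (subst eq) (simp add: Vx_def dg_def dd_def)
      qed
    next
      case 3
      then consider "b = a" | "b = 0" | "b = a - s" "b \<noteq> 0" | "0 < b" "b < a" "b \<noteq> a - s" using assms by linarith
      then show ?thesis
      proof cases
        case 1 then show ?thesis using 3 a1 assms by (subst eq) (simp add: Vx_def dg_def dd_def)
      next
        case 2
        have "a - s \<le> k" using \<open>s < a\<close> assms by linarith
        then show ?thesis using 2 3 a1 assms p3 by (subst eq) (simp add: Vx_def dg_def dd_def)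
      next
        case 3
        have "a - s \<le> k" "1 \<le> a - s" using \<open>s < a\<close> assms by linarith+
        then show ?thesis using 3 \<open>s < a\<close> a1 assms p4 by (subst eq) (simp add: Vx_def dg_def dd_def)
      next
        case 4 then show ?thesis using \<open>s < a\<close> a1 assms by (subst eq) (simp add: Vx_def dg_def dd_def; linarith)
      qed
    qed
  qed
  finally show ?thesis .
qed

lemma n_carrier: "Mx s k x \<in> carrier_mat (s+k+1) (s+k+1)" "Vx s k x \<in> carrier_mat (s+k+1) (s+k+1)"
  by (auto simp: Mx_def Vx_def)

lemma dimMx[simp]: "dim_row (Mx s k x) = s+k+1" "dim_col (Mx s k x) = s+k+1"
   "dim_row (Vx s k x) = s+k+1" "dim_col (Vx s k x) = s+k+1"
  by (auto simp: Mx_def Vx_def)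

lemma prod_upt: "prod_list (map f [0..<n]) = (\<Prod>i = 0..<n. f i)"
  by (subst prod.distinct_set_conv_list[symmetric]) auto

lemma det_Vx: assumes "1 \<le> k" shows "det (Vx s k x) = 1"
proof -
  have "det (Vx s k x) = prod_list (diag_mat (Vx s k x))"
    by (rule det_lower_triangular[OF _ n_carrier(2)]) (use assms in \<open>auto simp: Vx_def\<close>)
  also have "\<dots> = 1" by (simp add: diag_mat_def prod_upt Vx_def)
  finally show ?thesis .
qed

lemma det_Mx:
  assumes "1 \<le> k" "k \<le> s" "x \<noteq> 1" "pq x \<noteq> 0"
  shows "det (Mx s k x) = dd s k x 0 * (pq x/(x-1))^k * (x-1)^(s-k) * (x-1)^k"
proof -
  have "det (Mx s k x * Vx s k x) = prod_list (diag_mat (Mx s k x * Vx s k x))"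
    by (rule det_upper_triangular[of _ "s+k+1"]) (use assms W_entry[OF assms(1,2) _ _ assms(3,4)] in \<open>auto simp: upper_triangular_def n_carrier dimMx\<close>)
  also have "\<dots> = (\<Prod>a = 0..<s+k+1. dd s k x a)"
    using W_entry[OF assms(1,2) _ _ assms(3,4)] by (simp add: diag_mat_def prod_upt n_carrier)
  also have "\<dots> = (\<Prod>a = 0..<1. dd s k x a) * (\<Prod>a = 1..<k+1. dd s k x a) * (\<Prod>a = k+1..<s+k+1. dd s k x a)"
  proof -
    have A: "prod (dd s k x) {0..<s+k+1} = prod (dd s k x) {0..<1} * prod (dd s k x) {1..<s+k+1}"
      by (rule prod.atLeastLessThan_concat[symmetric]) auto
    have B: "prod (dd s k x) {1..<s+k+1} = prod (dd s k x) {1..<k+1} * prod (dd s k x) {k+1..<s+k+1}"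
      by (rule prod.atLeastLessThan_concat[symmetric]) (use assms in auto)
    show ?thesis by (simp only: A B mult.assoc)
  qed
  also have "(\<Prod>a = 1..<k+1. dd s k x a) = (\<Prod>a = 1..<k+1. pq x/(x-1))"
    by (rule prod.cong) (auto simp: dd_def)
  also have "(\<Prod>a = k+1..<s+k+1. dd s k x a) = (\<Prod>a = k+1..<s+k+1. x - 1)"
    by (rule prod.cong) (auto simp: dd_def)
  finally have "det (Mx s k x * Vx s k x) = dd s k x 0 * (pq x/(x-1))^k * (x-1)^s" by simp
  moreover have "det (Mx s k x * Vx s k x) = det (Mx s k x)"
    using det_mult[OF n_carrier] det_Vx[OF assms(1)] by simp
  moreover have "(x-1)^s = ((x::real)-1)^(s-k) * (x-1)^k"
    using assms(2) by (simp add: power_add[symmetric])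
  ultimately show ?thesis by simp
qed



lemma prod_lin_mset: "(\<Prod>x\<leftarrow>xs. [:-x, 1:]) = prod_mset (image_mset (\<lambda>x. [:-x, 1:]) (mset xs))"
  by (simp add: prod_mset_prod_list[symmetric])

lemma poly_prod_lin: "poly (prod_mset (image_mset (\<lambda>x. [:-x, 1:]) B)) (a::real) = prod_mset (image_mset (\<lambda>x. a - x) B)"
  by (induction B) (auto simp: algebra_simps)

lemma lin_prod_inj:
  "\<And>B. prod_mset (image_mset (\<lambda>x. [:-x, 1:]) A) = prod_mset (image_mset (\<lambda>x. [:-(x::real), 1:]) B) \<Longrightarrow> A = B"
proof (induction A)
  case empty
  show ?case
  proof (rule ccontr)
    assume "{#} \<noteq> B"
    then obtain b where "b \<in># B" by (metis multiset_nonemptyE)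
    then obtain B' where B: "B = add_mset b B'" by (metis multi_member_split)
    have "poly (prod_mset (image_mset (\<lambda>x. [:-x, 1:]) B)) b = 0" by (simp add: B)
    then show False using empty by simp
  qed
next
  case (add a A)
  have "poly (prod_mset (image_mset (\<lambda>x. [:-x, 1:]) B)) a = 0" using add.prems[symmetric] by simp
  then have "0 \<in># image_mset (\<lambda>x. a - x) B" unfolding poly_prod_lin by (simp add: prod_mset_zero_iff)
  then have "a \<in># B" by auto
  then obtain B' where B: "B = add_mset a B'" by (metis multi_member_split)
  have "[:-a, 1:] * prod_mset (image_mset (\<lambda>x. [:-x, 1:]) A) = [:-a, 1:] * prod_mset (image_mset (\<lambda>x. [:-x, 1:]) B')"
    using add.prems by (simp add: B)
  moreover have nz: "[:-a, 1:] \<noteq> (0::real poly)" by simp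
  ultimately have "prod_mset (image_mset (\<lambda>x. [:-x, 1:]) A) = prod_mset (image_mset (\<lambda>x. [:-x, 1:]) B')"
    by (meson mult_left_cancel)
  then have "A = B'" by (rule add.IH)
  then show ?case by (simp add: B)
qed

lemma sorted_lin_unique:
  assumes "sorted xs" "sorted ys" "(\<Prod>x\<leftarrow>xs. [:-x, 1:]) = (\<Prod>x\<leftarrow>ys. [:-(x::real), 1:])"
  shows "xs = ys"
proof -
  have "mset xs = mset ys" using assms(3) unfolding prod_lin_mset by (rule lin_prod_inj)
  then have "sort ys = xs" "sort ys = ys" using assms(1,2) by (auto intro: properties_for_sort)
  then show ?thesis by simp
qed

lemma final_step:
  fixes r1 r2 g :: real
  assumes cp: "char_poly M = (\<Prod>x\<leftarrow>([0] @ replicate (k-1) r1 @ replicate (k-1) r2 @ mid @ [g]). [:-x, 1:])"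
    and mid: "\<forall>m\<in>set mid. r1 < m \<and> m < r2" and "r2 < g" "0 < r1" "r1 < r2" "2 \<le> k"
    and len: "length mid = s - k + 1" "k \<le> s"
  shows "sorted_eigenvalues M ! 1 = r1 \<and> sorted_eigenvalues M ! (s+k-1) = r2"
proof -
  define pre where "pre = 0 # r1 # replicate (k-2) r1 @ sort mid @ replicate (k-2) r2"
  define ys where "ys = pre @ [r2, g]"
  have sy: "sorted ys" using mid assms(3-6)
    by (fastforce simp: ys_def pre_def sorted_append in_set_replicate)
  have km: "k - 1 = Suc (k - 2)" using assms(6) by simp
  have "mset ([0] @ replicate (k-1) r1 @ replicate (k-1) r2 @ mid @ [g]) = mset ys"
    unfolding ys_def pre_def km by (simp add: ac_simps)
  then have cp2: "char_poly M = (\<Prod>x\<leftarrow>ys. [:-x, 1:])"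
    unfolding cp prod_lin_mset by simp
  have se: "sorted_eigenvalues M = ys"
    unfolding sorted_eigenvalues_def
    by (rule the_equality) (use sy cp2 sorted_lin_unique in auto)
  have lp: "length pre = s + k - 1" using len assms(6) by (simp add: pre_def)
  have "ys ! (s+k-1) = r2" unfolding ys_def lp[symmetric] by (simp add: nth_append)
  moreover have "ys ! 1 = r1" by (simp add: ys_def pre_def)
  ultimately show ?thesis by (simp add: se)
qed



definition Rp :: "nat \<Rightarrow> nat \<Rightarrow> real poly" where
  "Rp s k = [:-(real s + real k + 1), 3*real s + 4, -(real s + 4), 1:]"

lemma poly_Rp: "poly (Rp s k) x = x^3 - (real s+4)*x^2 + (3*real s+4)*x - (real s+real k+1)"
  by (simp add: Rp_def algebra_simps power2_eq_square power3_eq_cube)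

lemma pq_poly: "pq x = poly [:1,-3,1:] x"
  by (simp add: pq_def algebra_simps power2_eq_square)

lemma char_eval:
  assumes "1 \<le> k" "k \<le> s" "x \<noteq> 1" "pq x \<noteq> 0"
  shows "poly (char_poly (laplacian (s+k+1) (spider_adj s k))) x * (x-1)
     = (x-1)^(s-k) * pq x^(k-1) * (x * poly (Rp s k) x)"
proof -
  have L: "laplacian (s+k+1) (spider_adj s k) \<in> carrier_mat (s+k+1) (s+k+1)" by (simp add: laplacian_def)
  have "poly (char_poly (laplacian (s+k+1) (spider_adj s k))) x = det (Mx s k x)"
    using char_poly_matrix[OF L] Mx_char[OF assms(1,2)] by simp
  also have "\<dots> = dd s k x 0 * (pq x/(x-1))^k * (x-1)^(s-k) * (x-1)^k" by (rule det_Mx[OF assms])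
  also have "\<dots> = dd s k x 0 * pq x^k * (x-1)^(s-k)"
    using assms(3) by (simp add: power_divide)
  finally have e: "poly (char_poly (laplacian (s+k+1) (spider_adj s k))) x = dd s k x 0 * pq x^k * (x-1)^(s-k)" .
  have e2: "dd s k x 0 * pq x * (x-1) = x * poly (Rp s k) x"
    using assms(3,4) unfolding poly_Rp dd_def by (simp add: field_simps) (simp add: pq_def algebra_simps power2_eq_square power3_eq_cube)
  have e3: "pq x^k = pq x * pq x^(k-1)" using assms(1) by (cases k) auto
  show ?thesis unfolding e e3 e2[symmetric] by (simp add: ac_simps)
qed

lemma poly_eq_cofinite:
  fixes f g :: "real poly"
  assumes "finite F" "\<And>x. x \<notin> F \<Longrightarrow> poly f x = poly g x"
  shows "f = g"
proof (rule ccontr)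
  assume "f \<noteq> g"
  then have "f - g \<noteq> 0" by simp
  then have "finite {x. poly (f-g) x = 0}" by (rule poly_roots_finite)
  moreover have "- F \<subseteq> {x. poly (f-g) x = 0}" using assms(2) by auto
  ultimately have "finite (- F)" by (rule finite_subset[rotated])
  then have "finite (F \<union> - F)" using assms(1) by simp
  then show False using infinite_UNIV_char_0[where 'a=real] by simp
qed

lemma char_poly_id:
  assumes "1 \<le> k" "k \<le> s"
  shows "char_poly (laplacian (s+k+1) (spider_adj s k)) * [:-1,1:]
     = [:-1,1:]^(s-k) * [:1,-3,1:]^(k-1) * ([:0,1:] * Rp s k)"
proof (rule poly_eq_cofinite[of "{1} \<union> {x. poly [:1,-3,1:] x = 0}"])
  show "finite ({1} \<union> {x. poly [:1,-3,1:] x = (0::real)})" using poly_roots_finite[of "[:1,-3,1::real:]"] by simp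
next
  fix x assume "x \<notin> {1} \<union> {x. poly [:1,-3,1:] x = (0::real)}"
  then have "x \<noteq> 1" "pq x \<noteq> 0" by (auto simp: pq_poly)
  from char_eval[OF assms this] show "poly (char_poly (laplacian (s+k+1) (spider_adj s k)) * [:-1,1:]) x
     = poly ([:-1,1:]^(s-k) * [:1,-3,1:]^(k-1) * ([:0,1:] * Rp s k)) x"
    by (simp add: pq_poly algebra_simps)
qed



definition lin :: "real \<Rightarrow> real poly" where "lin x = [:-x, 1:]"

lemma lin_nz[simp]: "lin x \<noteq> 0" by (simp add: lin_def)

lemma sqrt5: "sqrt 5 * sqrt 5 = (5::real)" "2 < sqrt (5::real)" "sqrt (5::real) < 3"
  by (simp, rule real_less_rsqrt, simp, rule real_less_lsqrt, simp_all)

definition r1 :: real where "r1 = (3 - sqrt 5)/2"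
definition r2 :: real where "r2 = (3 + sqrt 5)/2"

lemma r_bounds: "0 < r1" "r1 < 1" "1 < r2" "r2 < 3" "r1 < r2"
  using sqrt5 by (auto simp: r1_def r2_def)

lemma r_sq: "r1^2 = 3*r1 - 1" "r2^2 = 3*r2 - 1"
  using sqrt5(1) by (auto simp: r1_def r2_def power2_eq_square field_simps)

lemma P_factor: "[:1,-3,1:] = lin r1 * lin r2"
proof -
  have "r1 + r2 = 3" "r1 * r2 = 1" using sqrt5(1) by (auto simp: r1_def r2_def field_simps)
  then have "poly [:1,-3,1:] x = poly (lin r1 * lin r2) x" for x
  proof -
    have "(x - r1)*(x-r2) = x*x - (r1+r2)*x + r1*r2" by (simp add: algebra_simps)
    then show ?thesis using \<open>r1 + r2 = 3\<close> \<open>r1 * r2 = 1\<close> by (simp add: lin_def algebra_simps)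
  qed
  then show ?thesis using poly_eq_poly_eq_iff by blast
qed

lemma R_at_r:
  assumes "r^2 = 3*r - 1"
  shows "poly (Rp s k) r = - real k"
proof -
  have "r^3 = r * r^2" by (simp add: power3_eq_cube power2_eq_square)
  also have "\<dots> = r * (3*r - 1)" using assms by simp
  also have "\<dots> = 3*r^2 - r" by (simp add: algebra_simps power2_eq_square)
  also have "\<dots> = 8*r - 3" using assms by simp
  finally have h3: "r^3 = 8*r - 3" .
  show ?thesis unfolding poly_Rp h3 assms by (simp add: algebra_simps)
qed



lemma lin_eta: "(\<lambda>x. [:-x, 1:]) = lin" by (rule ext) (simp add: lin_def)

lemma poly_lin: "poly (lin a) z = z - a" by (simp add: lin_def)

lemma r2_gt2: "2 < r2" using sqrt5 by (simp add: r2_def)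

lemma main_cp:
  assumes "2 \<le> k" "k \<le> s"
  shows "\<exists>mid g. char_poly (laplacian (s+k+1) (spider_adj s k))
     = (\<Prod>x\<leftarrow>([0] @ replicate (k-1) r1 @ replicate (k-1) r2 @ mid @ [g]). [:-x, 1:])
     \<and> (\<forall>m\<in>set mid. r1 < m \<and> m < r2) \<and> r2 < g \<and> length mid = s - k + 1"
proof -
  let ?L = "laplacian (s+k+1) (spider_adj s k)"
  have l1: "[:-1,1:] = lin 1" "[:0,1:] = lin 0" by (simp_all add: lin_def)
  have cid: "char_poly ?L * lin 1 = lin 1^(s-k) * (lin r1 * lin r2)^(k-1) * (lin 0 * Rp s k)"
    using char_poly_id[of k s] assms unfolding l1 P_factor by simp
  have Ra: "poly (Rp s k) r1 = - real k" "poly (Rp s k) r2 = - real k"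
    using R_at_r r_sq by auto
  have kpos: "0 < real k" using assms by simp
  show ?thesis
  proof (cases "k < s")
    case True
    have R1: "0 < poly (Rp s k) 1" using True by (simp add: poly_Rp)
    have Rbig: "0 < poly (Rp s k) (real s + 4)"
    proof -
      have "poly (Rp s k) (real s + 4) = (3*real s+4)*(real s + 4) - (real s+real k+1)"
        by (simp add: poly_Rp power2_eq_square power3_eq_cube algebra_simps)
      also have "\<dots> > 0"
      proof -
        have "real k \<le> real s" "0 \<le> real s * real s" using assms by auto
        moreover have "(3*real s+4)*(real s + 4) - (real s+real k+1) = 3*(real s*real s) + 15*real s + 15 - real k"
          by (simp add: algebra_simps)
        ultimately show ?thesis by linarith
      qed
      finally show ?thesis .
    qed
    obtain a where a: "r1 < a" "a < 1" "poly (Rp s k) a = 0"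
      using poly_IVT_pos[of r1 1 "Rp s k"] r_bounds Ra R1 kpos by auto
    obtain b where b: "1 < b" "b < r2" "poly (Rp s k) b = 0"
      using poly_IVT_neg[of 1 r2 "Rp s k"] r_bounds Ra R1 kpos by auto
    obtain g where g: "r2 < g" "g < real s + 4" "poly (Rp s k) g = 0"
      using poly_IVT_pos[of r2 "real s + 4" "Rp s k"] r_bounds Ra Rbig kpos by auto
    have fac: "Rp s k = lin a * lin b * lin g"
    proof (rule poly_eqI_degree_lead_coeff[where n=3 and A="{a,b,g}"])
      show "card {a,b,g} \<ge> 3" using a b g by auto
      show "coeff (Rp s k) 3 = coeff (lin a * lin b * lin g) 3" by (simp add: Rp_def lin_def numeral_3_eq_3)
      show "degree (Rp s k) \<le> 3" by (simp add: Rp_def)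
      show "degree (lin a * lin b * lin g) \<le> 3" by (simp add: lin_def)
      show "poly (Rp s k) z = poly (lin a * lin b * lin g) z" if "z \<in> {a,b,g}" for z
        using that a b g by (auto simp: poly_lin)
    qed
    have sk: "s - k = Suc (s - k - 1)" using True by simp
    have "char_poly ?L * lin 1 = (lin 1^(s-k-1) * (lin r1 * lin r2)^(k-1) * (lin 0 * (lin a * lin b * lin g))) * lin 1"
      unfolding cid fac by (subst sk) (simp add: ac_simps)
    then have "char_poly ?L = lin 1^(s-k-1) * (lin r1 * lin r2)^(k-1) * (lin 0 * (lin a * lin b * lin g))"
      by (rule mult_right_cancel[OF lin_nz, THEN iffD1])
    also have "\<dots> = (\<Prod>x\<leftarrow>([0] @ replicate (k-1) r1 @ replicate (k-1) r2 @ (replicate (s-k-1) 1 @ [a,b]) @ [g]). [:-x, 1:])"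
      unfolding lin_eta by (simp add: power_mult_distrib ac_simps)
    finally show ?thesis using a b g r_bounds True
      by (intro exI[of _ "replicate (s-k-1) 1 @ [a,b]"] exI[of _ g]) auto
  next
    case False
    then have sk: "s = k" using assms by simp
    define S2 where "S2 = [:2*real k+1, -(real k+3), 1:]"
    have pS2: "poly S2 x = x^2 - (real k+3)*x + (2*real k+1)" for x
      by (simp add: S2_def algebra_simps power2_eq_square)
    have RS: "Rp s k = lin 1 * S2"
    proof -
      have "poly (Rp s k) x = poly (lin 1 * S2) x" for x
        unfolding poly_Rp sk by (simp add: pS2 lin_def algebra_simps power2_eq_square power3_eq_cube)
      then show ?thesis using poly_eq_poly_eq_iff by blast
    qed
    have Sr: "poly S2 r = real k * (2 - r)" if "r^2 = 3*r - 1" for r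
      unfolding pS2 that by (simp add: algebra_simps)
    have S1: "0 < poly S2 r1" using Sr[OF r_sq(1)] r_bounds kpos by simp
    have S2n: "poly S2 r2 < 0" using Sr[OF r_sq(2)] r2_gt2 kpos by (simp add: mult_pos_neg)
    have Sbig: "0 < poly S2 (real k + 3)" unfolding pS2 by (simp add: power2_eq_square algebra_simps)
    obtain a where a: "r1 < a" "a < r2" "poly S2 a = 0"
      using poly_IVT_neg[of r1 r2 S2] r_bounds S1 S2n by auto
    obtain g where g: "r2 < g" "g < real k + 3" "poly S2 g = 0"
      using poly_IVT_pos[of r2 "real k + 3" S2] r_bounds S2n Sbig by auto
    have fac: "S2 = lin a * lin g"
    proof (rule poly_eqI_degree_lead_coeff[where n=2 and A="{a,g}"])
      show "card {a,g} \<ge> 2" using a g by auto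
      show "coeff S2 2 = coeff (lin a * lin g) 2" by (simp add: S2_def lin_def numeral_2_eq_2)
      show "degree S2 \<le> 2" by (simp add: S2_def)
      show "degree (lin a * lin g) \<le> 2" by (simp add: lin_def)
      show "poly S2 z = poly (lin a * lin g) z" if "z \<in> {a,g}" for z
        using that a g by (auto simp: poly_lin)
    qed
    have "char_poly ?L * lin 1 = ((lin r1 * lin r2)^(k-1) * (lin 0 * (lin a * lin g))) * lin 1"
      unfolding cid unfolding RS fac unfolding sk by (simp add: ac_simps)
    then have "char_poly ?L = (lin r1 * lin r2)^(k-1) * (lin 0 * (lin a * lin g))"
      by (rule mult_right_cancel[OF lin_nz, THEN iffD1])
    also have "\<dots> = (\<Prod>x\<leftarrow>([0] @ replicate (k-1) r1 @ replicate (k-1) r2 @ [a] @ [g]). [:-x, 1:])"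
      unfolding lin_eta by (simp add: power_mult_distrib ac_simps)
    finally show ?thesis using a g sk
      by (intro exI[of _ "[a]"] exI[of _ g]) auto
  qed
qed

theorem lemma3p3:
  fixes s k n :: nat
  assumes "2 \<le> k" and "k \<le> s" and "n = s + k + 1"
  shows "lap_eig n (spider_adj s k) 2 = (3 - sqrt 5) / 2
       \<and> lap_eig n (spider_adj s k) (n - 1) = (3 + sqrt 5) / 2"
proof -
  obtain mid g where cp: "char_poly (laplacian (s+k+1) (spider_adj s k))
     = (\<Prod>x\<leftarrow>([0] @ replicate (k-1) r1 @ replicate (k-1) r2 @ mid @ [g]). [:-x, 1:])"
    and m: "\<forall>m\<in>set mid. r1 < m \<and> m < r2" "r2 < g" "length mid = s - k + 1"
    using main_cp[OF assms(1,2)] by blast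
  have "sorted_eigenvalues (laplacian (s+k+1) (spider_adj s k)) ! 1 = r1 \<and>
        sorted_eigenvalues (laplacian (s+k+1) (spider_adj s k)) ! (s+k-1) = r2"
    by (rule final_step[OF cp m(1,2)]) (use r_bounds assms m(3) in auto)
  moreover have "n - 1 - 1 = s + k - 1" using assms by simp
  ultimately show ?thesis using assms(3) by (simp add: lap_eig_def r1_def r2_def)
qed

end
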